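(* Under the hypotheses below, if $|r_i|=|r_j|$ then $|\sigma_a(r_i)|=|\sigma_a(r_j)|$ for every nonzero $a\in\mathcal M$.
   Context: $\mathcal M$ denotes the $\mathbb Q$-vector space $\mathbb Q^{<\omega}$ of all sequences of rationals with only finitely many nonzero terms, with zero vector $\vec 0$; a relation is definable if it is first-order definable without parameters in $\langle\mathcal M;+\rangle$. Let $n\ge1$, let $r_1,\dots,r_n$ be pairwise distinct rationals with $r_i\notin\{0,1\}$, and let $R$ be a definable binary relation such that for all $x\ne\vec 0$ and all $y$: $R(x,y)\iff y\in\{r_1x,\dots,r_nx\}$. Let $\varphi$ be a permutation of $\mathcal M$ preserving $R$ (i.e. $R(a,b)\iff R(\varphi(a),\varphi(b))$). Then $\varphi(\vec 0)=\vec 0$ and for every nonzero $a$ there is a unique permutation $\sigma_a$ of $\{r_1,\dots,r_n\}$ with $\varphi(r_ia)=\sigma_a(r_i)\varphi(a)$ for all $i$; this is the $\sigma_a$ in the claim. *)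

theory Defs
  imports Complex_Main "HOL-Library.Poly_Mapping"
begin

type_synonym M = "nat \<Rightarrow>\<^sub>0 rat"

definition smul :: "rat \<Rightarrow> M \<Rightarrow> M" where
  "smul r x = Poly_Mapping.map (\<lambda>c. r * c) x"

datatype fterm = TVar nat | TPlus fterm fterm

datatype fform = FEq fterm fterm | FNot fform | FAnd fform fform | FEx nat fform

fun teval :: "(nat \<Rightarrow> M) \<Rightarrow> fterm \<Rightarrow> M" where
  "teval e (TVar v) = e v"
| "teval e (TPlus s t) = teval e s + teval e t"

fun tvars :: "fterm \<Rightarrow> nat set" where
  "tvars (TVar v) = {v}"
| "tvars (TPlus s t) = tvars s \<union> tvars t"

fun fsat :: "(nat \<Rightarrow> M) \<Rightarrow> fform \<Rightarrow> bool" where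
  "fsat e (FEq s t) = (teval e s = teval e t)"
| "fsat e (FNot p) = (\<not> fsat e p)"
| "fsat e (FAnd p q) = (fsat e p \<and> fsat e q)"
| "fsat e (FEx v p) = (\<exists>m. fsat (e(v := m)) p)"

fun ffree :: "fform \<Rightarrow> nat set" where
  "ffree (FEq s t) = tvars s \<union> tvars t"
| "ffree (FNot p) = ffree p"
| "ffree (FAnd p q) = ffree p \<union> ffree q"
| "ffree (FEx v p) = ffree p - {v}"

definition definable2 :: "(M \<Rightarrow> M \<Rightarrow> bool) \<Rightarrow> bool" where
  "definable2 R \<longleftrightarrow> (\<exists>p. ffree p \<subseteq> {0, 1} \<and>
     (\<forall>a b. R a b \<longleftrightarrow> fsat (\<lambda>v. if v = 0 then a else if v = 1 then b else 0) p))"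

end

theory Submission
  imports Defs
begin
lemma smul_lookup: "Poly_Mapping.lookup (smul q x) k = q * Poly_Mapping.lookup x k"
  unfolding smul_def by (simp add: Poly_Mapping.map.rep_eq when_def)
lemma nz_lookup: assumes "(x::M) \<noteq> 0" obtains k where "Poly_Mapping.lookup x k \<noteq> 0"
proof -
  have "\<exists>k. Poly_Mapping.lookup x k \<noteq> 0"
  proof (rule ccontr)
    assume "\<not> (\<exists>k. Poly_Mapping.lookup x k \<noteq> 0)"
    then have "x = 0" by (intro poly_mapping_eqI) simp
    with assms show False by simp
  qed
  then show ?thesis using that by blast
qed
lemma smul_mult: "smul a (smul b x) = smul (a*b) x"
  by (rule poly_mapping_eqI) (simp add: smul_lookup)
lemma smul_one: "smul 1 x = x"
  by (rule poly_mapping_eqI) (simp add: smul_lookup)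
lemma smul_neg: "smul (-1) x = - x"
  by (rule poly_mapping_eqI) (simp add: smul_lookup lookup_minus)
lemma smul_eq0: "smul a x = 0 \<longleftrightarrow> a = 0 \<or> x = 0"
proof
  assume h: "smul a x = 0"
  show "a = 0 \<or> x = 0"
  proof (rule ccontr)
    assume "\<not> (a = 0 \<or> x = 0)"
    then obtain k where "Poly_Mapping.lookup x k \<noteq> 0" "a \<noteq> 0" using nz_lookup by blast
    then have "Poly_Mapping.lookup (smul a x) k \<noteq> 0" by (simp add: smul_lookup)
    with h show False by simp
  qed
next
  assume "a = 0 \<or> x = 0" then show "smul a x = 0"
    by (auto intro!: poly_mapping_eqI simp: smul_lookup)
qed
lemma smul_inj: assumes "x \<noteq> 0" shows "smul a x = smul b x \<longleftrightarrow> a = b"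
proof
  assume h: "smul a x = smul b x"
  obtain k where k: "Poly_Mapping.lookup x k \<noteq> 0" using assms nz_lookup by blast
  have "a * Poly_Mapping.lookup x k = b * Poly_Mapping.lookup x k" using arg_cong[OF h, of "\<lambda>p. Poly_Mapping.lookup p k"] by (simp add: smul_lookup)
  with k show "a = b" by simp
qed simp

lemma smul_comm: "smul a (smul b x) = smul b (smul a x)"
  by (simp add: smul_mult mult.commute)

locale L5 =
  fixes S :: "rat set" and R :: "M \<Rightarrow> M \<Rightarrow> bool" and \<phi> :: "M \<Rightarrow> M" and s :: rat
  assumes finS: "finite S" and S0: "0 \<notin> S"
    and Rd: "\<And>x y. x \<noteq> 0 \<Longrightarrow> R x y \<longleftrightarrow> (\<exists>q\<in>S. y = smul q x)"
    and bij: "bij \<phi>" and pres: "\<And>a b. R a b \<longleftrightarrow> R (\<phi> a) (\<phi> b)"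
    and sS: "s \<in> S" and nsS: "-s \<in> S"
begin

lemma s0: "s \<noteq> 0" using sS S0 by auto

lemma Rto0: "R x 0 \<Longrightarrow> x = 0"
proof (rule ccontr)
  assume "R x 0" "x \<noteq> 0"
  then obtain q where "q \<in> S" "0 = smul q x" using Rd by blast
  with S0 \<open>x \<noteq> 0\<close> show False by (metis smul_eq0)
qed

lemma phi0: "\<phi> 0 = 0"
proof (rule ccontr)
  assume z: "\<phi> 0 \<noteq> 0"
  define w1 where "w1 = smul (1/s) (\<phi> 0)"
  define w2 where "w2 = smul (-1/s) (\<phi> 0)"
  have w1: "w1 \<noteq> 0" "w2 \<noteq> 0" using z s0 by (auto simp: w1_def w2_def smul_eq0)
  have "\<phi> 0 = smul s w1" using s0 by (simp add: w1_def smul_mult smul_one)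
  then have "R w1 (\<phi> 0)" using Rd[OF w1(1)] sS by blast
  moreover have "\<phi> 0 = smul (-s) w2" using s0 by (simp add: w2_def smul_mult smul_one)
  then have "R w2 (\<phi> 0)" using Rd[OF w1(2)] nsS by blast
  moreover have "w1 \<noteq> w2"
  proof
    assume "w1 = w2"
    then have "1/s = -1/s" unfolding w1_def w2_def using smul_inj[OF z] by blast
    with s0 show False by (simp add: field_simps)
  qed
  moreover have "\<phi> (inv \<phi> w) = w" for w using bij by (simp add: bij_is_surj surj_f_inv_f)
  ultimately have "R (inv \<phi> w1) 0" "R (inv \<phi> w2) 0" using pres by metis+
  then have "inv \<phi> w1 = inv \<phi> w2" by (metis Rto0)
  then show False using \<open>w1 \<noteq> w2\<close> \<open>\<And>w. \<phi> (inv \<phi> w) = w\<close> by metis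
qed

lemma phinz: "x \<noteq> 0 \<Longrightarrow> \<phi> x \<noteq> 0"
  using phi0 bij by (metis bij_is_inj inj_eq)

lemma step: assumes "x \<noteq> 0" "q \<in> S" shows "\<exists>q'\<in>S. \<phi> (smul q x) = smul q' (\<phi> x)"
proof -
  have "R x (smul q x)" using Rd[OF assms(1)] assms(2) by blast
  then have "R (\<phi> x) (\<phi> (smul q x))" using pres by blast
  then show ?thesis using Rd[OF phinz[OF assms(1)]] by blast
qed

definition alpha where "alpha x q = (SOME q'. q' \<in> S \<and> \<phi> (smul q x) = smul q' (\<phi> x))"

lemma alpha: assumes "x \<noteq> 0" "q \<in> S"
  shows "alpha x q \<in> S" "\<phi> (smul q x) = smul (alpha x q) (\<phi> x)"
  using someI_ex[OF step[OF assms, unfolded Bex_def]] unfolding alpha_def by blast+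

lemma alpha_inj: assumes "x \<noteq> 0" shows "inj_on (alpha x) S"
proof
  fix q q' assume q: "q \<in> S" "q' \<in> S" "alpha x q = alpha x q'"
  then have "\<phi> (smul q x) = \<phi> (smul q' x)" using alpha[OF assms] by metis
  then have "smul q x = smul q' x" using bij by (meson bij_is_inj injD)
  then show "q = q'" using smul_inj[OF assms] by blast
qed

lemma alpha_img: assumes "x \<noteq> 0" shows "alpha x ` S = S"
  using endo_inj_surj[OF finS _ alpha_inj[OF assms]] alpha(1)[OF assms] by blast

lemma sum_alpha: assumes "x \<noteq> 0" shows "(\<Sum>q\<in>S. g (alpha x q)) = (\<Sum>q\<in>S. g q)"
proof -
  have "(\<Sum>q\<in>S. g q) = (\<Sum>q\<in>alpha x ` S. g q)" using alpha_img[OF assms] by simp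
  also have "\<dots> = (\<Sum>q\<in>S. g (alpha x q))" using sum.reindex[OF alpha_inj[OF assms]] by simp
  finally show ?thesis by simp
qed

lemma kap_ex: assumes "x \<noteq> 0" shows "\<exists>k. \<phi> (smul (-1) x) = smul k (\<phi> x)"
proof -
  define x' where "x' = smul (-1) x"
  have x': "x' \<noteq> 0" using assms by (simp add: x'_def smul_eq0)
  have e: "smul s x = smul (-s) x'" by (simp add: x'_def smul_mult)
  have "\<phi> (smul s x) = smul (alpha x s) (\<phi> x)" using alpha[OF assms sS] by simp
  moreover have "\<phi> (smul (-s) x') = smul (alpha x' (-s)) (\<phi> x')" using alpha[OF x' nsS] by simp
  ultimately have h: "smul (alpha x s) (\<phi> x) = smul (alpha x' (-s)) (\<phi> x')" using e by simp
  have B: "alpha x' (-s) \<noteq> 0" using alpha(1)[OF x' nsS] S0 by auto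
  have "\<phi> x' = smul (1 / alpha x' (-s)) (smul (alpha x' (-s)) (\<phi> x'))"
    using B by (simp add: smul_mult smul_one)
  also have "\<dots> = smul (1 / alpha x' (-s)) (smul (alpha x s) (\<phi> x))" using h by simp
  also have "\<dots> = smul (alpha x s / alpha x' (-s)) (\<phi> x)" by (simp add: smul_mult)
  finally show ?thesis unfolding x'_def by blast
qed

definition kap where "kap x = (SOME k. \<phi> (smul (-1) x) = smul k (\<phi> x))"

lemma kap: "x \<noteq> 0 \<Longrightarrow> \<phi> (smul (-1) x) = smul (kap x) (\<phi> x)"
  unfolding kap_def using someI_ex[OF kap_ex] by blast

lemma kap_nz: assumes "x \<noteq> 0" shows "kap x \<noteq> 0"
proof
  assume "kap x = 0"
  then have "\<phi> (smul (-1) x) = 0" using kap[OF assms] by (simp add: smul_eq0)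
  moreover have "smul (-1) x \<noteq> 0" using assms by (simp add: smul_eq0)
  ultimately show False using phinz by blast
qed

lemma kap_step: assumes x: "x \<noteq> 0" and q: "q \<in> S"
  shows "kap (smul q x) * alpha x q = alpha (smul (-1) x) q * kap x"
proof -
  define x' where "x' = smul (-1) x"
  have x': "x' \<noteq> 0" using assms by (simp add: x'_def smul_eq0)
  have qx: "smul q x \<noteq> 0" using x q S0 by (auto simp: smul_eq0)
  have "\<phi> (smul (-1) (smul q x)) = \<phi> (smul q x')" by (simp add: x'_def smul_comm)
  also have "\<dots> = smul (alpha x' q) (\<phi> x')" using alpha(2)[OF x' q] .
  also have "\<dots> = smul (alpha x' q * kap x) (\<phi> x)" using kap[OF x] by (simp add: x'_def smul_mult)
  finally have 1: "\<phi> (smul (-1) (smul q x)) = smul (alpha x' q * kap x) (\<phi> x)" .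
  have "\<phi> (smul (-1) (smul q x)) = smul (kap (smul q x)) (\<phi> (smul q x))" using kap[OF qx] .
  also have "\<dots> = smul (kap (smul q x) * alpha x q) (\<phi> x)" using alpha(2)[OF x q] by (simp add: smul_mult)
  finally show ?thesis using 1 smul_inj[OF phinz[OF x]] unfolding x'_def by simp
qed

lemma kap_neg: assumes x: "x \<noteq> 0" shows "kap (smul (-1) x) * kap x = 1"
proof -
  define x' where "x' = smul (-1) x"
  have x': "x' \<noteq> 0" using assms by (simp add: x'_def smul_eq0)
  have "smul 1 (\<phi> x) = \<phi> (smul (-1) x')" by (simp add: x'_def smul_mult smul_one)
  also have "\<dots> = smul (kap x') (\<phi> x')" using kap[OF x'] .
  also have "\<dots> = smul (kap x' * kap x) (\<phi> x)" using kap[OF x] by (simp add: x'_def smul_mult)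
  finally show ?thesis using smul_inj[OF phinz[OF x]] unfolding x'_def by simp
qed


definition Lf where "Lf x = ln (real_of_rat \<bar>kap x\<bar>)"
definition P where "P = {q\<in>S. -q \<in> S}"
definition B where "B = 2 * (\<Sum>q\<in>S. \<bar>ln (real_of_rat \<bar>q\<bar>)\<bar>)"

lemma lnq_mult: "a \<noteq> 0 \<Longrightarrow> b \<noteq> 0 \<Longrightarrow> ln (real_of_rat \<bar>a*b\<bar>) = ln (real_of_rat \<bar>a\<bar>) + ln (real_of_rat \<bar>b\<bar>)"
  by (simp add: abs_mult of_rat_mult ln_mult)
lemma lnq_div: "a \<noteq> 0 \<Longrightarrow> b \<noteq> 0 \<Longrightarrow> ln (real_of_rat \<bar>a/b\<bar>) = ln (real_of_rat \<bar>a\<bar>) - ln (real_of_rat \<bar>b\<bar>)"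
  by (simp add: abs_divide of_rat_divide ln_div)

lemma L_step: assumes x: "x \<noteq> 0" and q: "q \<in> S"
  shows "Lf (smul q x) = Lf x + ln (real_of_rat \<bar>alpha (smul (-1) x) q\<bar>) - ln (real_of_rat \<bar>alpha x q\<bar>)"
proof -
  define x' where "x' = smul (-1) x"
  have x': "x' \<noteq> 0" using assms by (simp add: x'_def smul_eq0)
  have a1: "alpha x q \<noteq> 0" using alpha(1)[OF x q] S0 by auto
  have a2: "alpha x' q \<noteq> 0" using alpha(1)[OF x' q] S0 by auto
  have k: "kap x \<noteq> 0" using kap_nz[OF x] .
  have "kap (smul q x) = (alpha x' q * kap x) / alpha x q"
    using kap_step[OF x q] a1 unfolding x'_def by (simp add: field_simps)
  then have "Lf (smul q x) = ln (real_of_rat \<bar>alpha x' q * kap x\<bar>) - ln (real_of_rat \<bar>alpha x q\<bar>)"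
    unfolding Lf_def using a1 a2 k lnq_div[of "alpha x' q * kap x" "alpha x q"] by simp
  also have "\<dots> = Lf x + ln (real_of_rat \<bar>alpha x' q\<bar>) - ln (real_of_rat \<bar>alpha x q\<bar>)"
    unfolding Lf_def using a2 k by (simp add: lnq_mult)
  finally show ?thesis unfolding x'_def .
qed

lemma L_neg: assumes x: "x \<noteq> 0" shows "Lf (smul (-1) x) = - Lf x"
proof -
  have x': "smul (-1) x \<noteq> 0" using assms by (simp add: smul_eq0)
  have "0 = ln (real_of_rat \<bar>kap (smul (-1) x) * kap x\<bar>)" using kap_neg[OF x] by simp
  also have "\<dots> = Lf (smul (-1) x) + Lf x" unfolding Lf_def
    using kap_nz[OF x] kap_nz[OF x'] by (simp add: lnq_mult)
  finally show ?thesis by simp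
qed

lemma L_sum: assumes x: "x \<noteq> 0" shows "(\<Sum>q\<in>S. Lf (smul q x)) = real (card S) * Lf x"
proof -
  have x': "smul (-1) x \<noteq> 0" using assms by (simp add: smul_eq0)
  have "(\<Sum>q\<in>S. Lf (smul q x)) = (\<Sum>q\<in>S. Lf x + ln (real_of_rat \<bar>alpha (smul (-1) x) q\<bar>) - ln (real_of_rat \<bar>alpha x q\<bar>))"
    using L_step[OF x] by (intro sum.cong) auto
  also have "\<dots> = (\<Sum>q\<in>S. Lf x) + (\<Sum>q\<in>S. ln (real_of_rat \<bar>alpha (smul (-1) x) q\<bar>)) - (\<Sum>q\<in>S. ln (real_of_rat \<bar>alpha x q\<bar>))"
    by (simp add: sum.distrib sum_subtractf)
  also have "\<dots> = real (card S) * Lf x"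
    using sum_alpha[OF x, of "\<lambda>q. ln (real_of_rat \<bar>q\<bar>)"] sum_alpha[OF x', of "\<lambda>q. ln (real_of_rat \<bar>q\<bar>)"] by simp
  finally show ?thesis .
qed

lemma P_sub: "P \<subseteq> S" unfolding P_def by auto

lemma L_P: assumes x: "x \<noteq> 0" shows "(\<Sum>q\<in>P. Lf (smul q x)) = 0"
proof -
  have inj: "inj_on uminus P" by (simp add: inj_on_def)
  have img: "uminus ` P = P" unfolding P_def by (auto simp: image_iff) (metis minus_minus)
  have "(\<Sum>q\<in>P. Lf (smul q x)) = (\<Sum>q\<in>uminus ` P. Lf (smul q x))" using img by simp
  also have "\<dots> = (\<Sum>q\<in>P. Lf (smul (-q) x))" using sum.reindex[OF inj] by simp
  also have "\<dots> = (\<Sum>q\<in>P. - Lf (smul q x))"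
  proof (rule sum.cong)
    fix q assume "q \<in> P"
    then have "q \<noteq> 0" using P_sub S0 by auto
    then have "smul q x \<noteq> 0" using x by (simp add: smul_eq0)
    moreover have "smul (-q) x = smul (-1) (smul q x)" by (simp add: smul_mult)
    ultimately show "Lf (smul (-q) x) = - Lf (smul q x)" using L_neg by simp
  qed simp
  also have "\<dots> = - (\<Sum>q\<in>P. Lf (smul q x))" by (simp add: sum_negf)
  finally show ?thesis by simp
qed

lemma L_U: assumes x: "x \<noteq> 0" shows "(\<Sum>q\<in>S-P. Lf (smul q x)) = real (card S) * Lf x"
  using sum.subset_diff[OF P_sub finS, of "\<lambda>q. Lf (smul q x)"] L_P[OF x] L_sum[OF x] by simp

lemma card_U: "card (S - P) + 2 \<le> card S"
proof -
  have "{s, -s} \<subseteq> P" unfolding P_def using sS nsS by auto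
  moreover have "s \<noteq> -s" using s0 by simp
  ultimately have "2 \<le> card P" using finite_subset[OF P_sub finS]
    by (metis card_2_iff card_mono)
  moreover have "card (S - P) = card S - card P" using card_Diff_subset[OF finite_subset[OF P_sub finS] P_sub] .
  moreover have "card P \<le> card S" using card_mono[OF finS P_sub] .
  ultimately show ?thesis by linarith
qed

lemma lnS_bound: "q \<in> S \<Longrightarrow> \<bar>ln (real_of_rat \<bar>q\<bar>)\<bar> \<le> (\<Sum>q\<in>S. \<bar>ln (real_of_rat \<bar>q\<bar>)\<bar>)"
  using finS by (intro member_le_sum) auto

lemma L_bound: assumes x: "x \<noteq> 0" and q: "q \<in> S" shows "\<bar>Lf (smul q x) - Lf x\<bar> \<le> B"
proof -
  have x': "smul (-1) x \<noteq> 0" using assms by (simp add: smul_eq0)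
  have "\<bar>Lf (smul q x) - Lf x\<bar> = \<bar>ln (real_of_rat \<bar>alpha (smul (-1) x) q\<bar>) - ln (real_of_rat \<bar>alpha x q\<bar>)\<bar>"
    using L_step[OF x q] by simp
  also have "\<dots> \<le> \<bar>ln (real_of_rat \<bar>alpha (smul (-1) x) q\<bar>)\<bar> + \<bar>ln (real_of_rat \<bar>alpha x q\<bar>)\<bar>" by linarith
  also have "\<dots> \<le> B" unfolding B_def
    using lnS_bound[OF alpha(1)[OF x q]] lnS_bound[OF alpha(1)[OF x' q]] by linarith
  finally show ?thesis .
qed

end

lemma exists_big: fixes f :: "'a \<Rightarrow> real" assumes "finite A" "A \<noteq> {}"
  shows "\<exists>a\<in>A. \<bar>sum f A\<bar> \<le> real (card A) * \<bar>f a\<bar>"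
proof (rule ccontr)
  assume "\<not> ?thesis"
  then have h: "\<And>a. a \<in> A \<Longrightarrow> real (card A) * \<bar>f a\<bar> < \<bar>sum f A\<bar>" by force
  have "real (card A) * (\<Sum>a\<in>A. \<bar>f a\<bar>) = (\<Sum>a\<in>A. real (card A) * \<bar>f a\<bar>)" by (simp add: sum_distrib_left)
  also have "\<dots> < (\<Sum>a\<in>A. \<bar>sum f A\<bar>)" using assms h by (intro sum_strict_mono) auto
  also have "\<dots> = real (card A) * \<bar>sum f A\<bar>" by simp
  also have "\<dots> \<le> real (card A) * (\<Sum>a\<in>A. \<bar>f a\<bar>)" by (intro mult_left_mono sum_abs) auto
  finally show False by simp
qed


context L5 begin

lemma cardS_pos: "0 < card S" using card_U by linarith

lemma L_grow: assumes x: "x \<noteq> 0" and nz: "Lf x \<noteq> 0"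
  shows "\<exists>q\<in>S. smul q x \<noteq> 0 \<and> \<bar>Lf x\<bar> + 2 * \<bar>Lf x\<bar> / real (card S) \<le> \<bar>Lf (smul q x)\<bar>"
proof -
  define N where "N = real (card S)"
  have Npos: "N > 0" using cardS_pos by (simp add: N_def)
  have ne: "S - P \<noteq> {}"
  proof
    assume e: "S - P = {}"
    have "N * Lf x = (\<Sum>q\<in>S-P. Lf (smul q x))" using L_U[OF x] by (simp add: N_def)
    then have "N * Lf x = 0" by (simp only: e sum.empty)
    with Npos nz show False by simp
  qed
  obtain q where q: "q \<in> S - P" and qb: "\<bar>\<Sum>q\<in>S-P. Lf (smul q x)\<bar> \<le> real (card (S-P)) * \<bar>Lf (smul q x)\<bar>"
    using exists_big[OF _ ne] finS by blast
  define d where "d = \<bar>Lf x\<bar>"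
  define e where "e = \<bar>Lf (smul q x)\<bar>"
  have e0: "e \<ge> 0" "d \<ge> 0" by (auto simp: e_def d_def)
  have "N * d \<le> real (card (S-P)) * e" using qb L_U[OF x] Npos
    by (simp add: N_def d_def e_def abs_mult)
  also have "\<dots> \<le> (N - 2) * e" using card_U e0 by (intro mult_right_mono) (auto simp: N_def)
  finally have h: "N * d \<le> (N - 2) * e" .
  then have "N * d \<le> N * e" using e0 by (smt (verit) mult_right_mono)
  then have de: "d \<le> e" using Npos by simp
  have "2 * d \<le> N * (e - d)" using h de by (simp add: algebra_simps)
  then have "2 * d / N \<le> e - d" using Npos by (simp add: divide_le_eq mult.commute)
  moreover have "q \<noteq> 0" using q S0 by auto
  ultimately show ?thesis using q x unfolding d_def e_def N_def by (auto simp: smul_eq0)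
qed

lemma L_zero: assumes x: "x \<noteq> 0" shows "Lf x = 0"
proof (rule ccontr)
  assume nz: "Lf x \<noteq> 0"
  define N where "N = real (card S)"
  have Npos: "N > 0" using cardS_pos by (simp add: N_def)
  define \<delta> where "\<delta> = \<bar>Lf x\<bar>"
  have dpos: "\<delta> > 0" using nz by (simp add: \<delta>_def)
  define c where "c = 2 * \<delta> / N"
  have cpos: "c > 0" using dpos Npos by (simp add: c_def)
  have claim: "\<exists>y. y \<noteq> 0 \<and> \<delta> + real k * c \<le> \<bar>Lf y\<bar>" for k
  proof (induction k)
    case 0 then show ?case using x by (auto simp: \<delta>_def)
  next
    case (Suc k)
    then obtain y where y: "y \<noteq> 0" "\<delta> + real k * c \<le> \<bar>Lf y\<bar>" by blast
    have ly: "Lf y \<noteq> 0" using y dpos cpos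
      by (smt (verit, best) mult_nonneg_nonneg of_nat_0_le_iff)
    obtain q where q: "q \<in> S" "smul q y \<noteq> 0" "\<bar>Lf y\<bar> + 2 * \<bar>Lf y\<bar> / N \<le> \<bar>Lf (smul q y)\<bar>"
      using L_grow[OF y(1) ly] unfolding N_def by blast
    have "\<delta> \<le> \<bar>Lf y\<bar>" using y(2) cpos by (smt (verit) mult_nonneg_nonneg of_nat_0_le_iff)
    then have "c \<le> 2 * \<bar>Lf y\<bar> / N" unfolding c_def using Npos by (simp add: divide_right_mono)
    then have "\<delta> + real (Suc k) * c \<le> \<bar>Lf (smul q y)\<bar>" using y(2) q(3) by (simp add: algebra_simps)
    then show ?case using q(2) by blast
  qed
  obtain k where k: "N * B / 2 < real k * c" using ex_less_of_nat_mult[OF cpos] by blast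
  obtain y where y: "y \<noteq> 0" "\<delta> + real k * c \<le> \<bar>Lf y\<bar>" using claim by blast
  have ly: "Lf y \<noteq> 0" using y dpos cpos
    by (smt (verit, best) mult_nonneg_nonneg of_nat_0_le_iff)
  obtain q where q: "q \<in> S" "smul q y \<noteq> 0" "\<bar>Lf y\<bar> + 2 * \<bar>Lf y\<bar> / N \<le> \<bar>Lf (smul q y)\<bar>"
    using L_grow[OF y(1) ly] unfolding N_def by blast
  have big: "N * B / 2 < \<bar>Lf y\<bar>" using k y(2) dpos by linarith
  have "B < 2 * \<bar>Lf y\<bar> / N" using big Npos by (simp add: field_simps)
  then have "B < \<bar>Lf (smul q y)\<bar> - \<bar>Lf y\<bar>" using q(3) by linarith
  also have "\<dots> \<le> \<bar>Lf (smul q y) - Lf y\<bar>" by linarith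
  also have "\<dots> \<le> B" using L_bound[OF y(1) q(1)] .
  finally show False by simp
qed

lemma kap_abs: assumes x: "x \<noteq> 0" shows "\<bar>kap x\<bar> = 1"
proof -
  have pos: "real_of_rat \<bar>kap x\<bar> > 0" using kap_nz[OF x] by simp
  have "ln (real_of_rat \<bar>kap x\<bar>) = 0" using L_zero[OF x] by (simp add: Lf_def)
  then have "real_of_rat \<bar>kap x\<bar> = 1" using pos by simp
  then show ?thesis by (metis of_rat_eq_1_iff)
qed

end


theorem mainTheorem5:
  fixes n :: nat and r :: "nat \<Rightarrow> rat" and R :: "M \<Rightarrow> M \<Rightarrow> bool"
    and \<phi> :: "M \<Rightarrow> M"
  assumes "n \<ge> 1"
    and "inj_on r {..<n}"
    and "\<forall>i<n. r i \<noteq> 0 \<and> r i \<noteq> 1"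
    and "definable2 R"
    and "\<forall>x y. x \<noteq> 0 \<longrightarrow> (R x y \<longleftrightarrow> y \<in> (\<lambda>i. smul (r i) x) ` {..<n})"
    and "bij \<phi>"
    and "\<forall>a b. R a b \<longleftrightarrow> R (\<phi> a) (\<phi> b)"
  shows "\<forall>a \<sigma>. a \<noteq> 0 \<and> bij_betw \<sigma> (r ` {..<n}) (r ` {..<n})
           \<and> (\<forall>i<n. \<phi> (smul (r i) a) = smul (\<sigma> (r i)) (\<phi> a))
         \<longrightarrow> (\<forall>i<n. \<forall>j<n. \<bar>r i\<bar> = \<bar>r j\<bar> \<longrightarrow> \<bar>\<sigma> (r i)\<bar> = \<bar>\<sigma> (r j)\<bar>)"
proof (intro allI impI)
  fix a \<sigma> i j
  assume H: "a \<noteq> 0 \<and> bij_betw \<sigma> (r ` {..<n}) (r ` {..<n})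
           \<and> (\<forall>i<n. \<phi> (smul (r i) a) = smul (\<sigma> (r i)) (\<phi> a))"
    and ij: "i < n" "j < n" and ab: "\<bar>r i\<bar> = \<bar>r j\<bar>"
  show "\<bar>\<sigma> (r i)\<bar> = \<bar>\<sigma> (r j)\<bar>"
  proof (cases "r i = r j")
    case True then show ?thesis by simp
  next
    case False
    then have rj: "r j = - r i" using ab by (auto simp: abs_eq_iff)
    interpret L5 "r ` {..<n}" R \<phi> "r i"
    proof
      show "finite (r ` {..<n})" by simp
      show "0 \<notin> r ` {..<n}" using assms(3) by auto
      show "R x y = (\<exists>q\<in>r ` {..<n}. y = smul q x)" if "x \<noteq> 0" for x y
        using assms(5) that by auto
      show "bij \<phi>" using assms(6) .
      show "R a b = R (\<phi> a) (\<phi> b)" for a b using assms(7) by blast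
      show "r i \<in> r ` {..<n}" using ij by auto
      show "- r i \<in> r ` {..<n}" using ij rj by (metis image_eqI lessThan_iff)
    qed
    have a: "a \<noteq> 0" using H by blast
    define y where "y = smul (r i) a"
    have y: "y \<noteq> 0" using a assms(3) ij by (simp add: y_def smul_eq0)
    have "smul (r j) a = smul (-1) y" by (simp add: y_def smul_mult rj)
    then have "smul (\<sigma> (r j)) (\<phi> a) = smul (kap y) (\<phi> y)" using H ij kap[OF y] by metis
    also have "\<dots> = smul (kap y * \<sigma> (r i)) (\<phi> a)" using H ij by (simp add: y_def smul_mult)
    finally have "\<sigma> (r j) = kap y * \<sigma> (r i)" using smul_inj[OF phinz[OF a]] by blast
    then show ?thesis using kap_abs[OF y] by (simp add: abs_mult)
  qed
qed

end
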